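(* Let $\mathcal{R}$ be a field and $(\mathcal{C}^{\bullet},\partial)$ a bigraded cochain complex of $\mathcal{R}$-vector spaces as in the context. Then there are vector space isomorphisms \[ B^{1}(\mathcal{C},\partial)\cong B^{1}(\mathcal{N}_{0},\overline{\partial})\oplus B^{1}(\mathcal{C}^{0,\bullet},\partial_{0,1}),\qquad Z^{1}(\mathcal{C},\partial)\cong Z^{1}(\mathcal{N}_{0},\overline{\partial})\oplus\ker(\rho_{1}), \] \[ H^{1}(\mathcal{C},\partial)\cong H^{1}(\mathcal{N}_{0},\overline{\partial})\oplus\frac{\ker(\rho_{1})}{B^{1}(\mathcal{C}^{0,\bullet},\partial_{0,1})}. \]
   Context: Setting: $\mathcal{C}^{k}=\bigoplus_{p+q=k}\mathcal{C}^{p,q}$ with $\mathcal{C}^{p,q}=\{0\}$ if $p<0$ or $q<0$; $\partial$ is linear of degree $1$, $\partial^{2}=0$, $\partial=\partial_{2,-1}+\partial_{1,0}+\partial_{0,1}$ with $\partial_{i,j}(\mathcal{C}^{p,q})\subseteq\mathcal{C}^{p+i,q+j}$. For $\eta\in\mathcal{C}^k$, $\eta_{p,q}$ is its $\mathcal{C}^{p,q}$-component; $\pi_{1}:\mathcal{C}\to\bigoplus_{j\geq1}\mathcal{C}^{i,j}$ is the projection along the bigrading. $(\mathcal{C}^{0,\bullet},\partial_{0,1})$ is a cochain complex. $\mathcal{N}_{0}:=\bigoplus_{p}\ker(\partial_{0,1}:\mathcal{C}^{p,0}\to\mathcal{C}^{p,1})$ (degree $p$ part in $\mathcal{C}^{p,0}$)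 is a subcomplex of $(\mathcal{C},\partial)$ with differential $\overline\partial:=\partial|_{\mathcal{N}_0}=\partial_{1,0}|_{\mathcal{N}_0}$. $\mathcal{A}^{k}:=\{\pi_{1}(\eta)\mid\eta\in\mathcal{C}^{k},\ \pi_{1}(\partial\eta)=0\}$; for $\xi\in\mathcal{A}^{k}$ and any $\eta\in\mathcal{C}^{k}$ with $\pi_{1}\eta=\xi$, $\pi_{1}(\partial\eta)=0$, the element $\partial_{2,-1}\xi_{k-1,1}+\partial_{1,0}\eta_{k,0}$ is a cocycle of $(\mathcal{N}_{0},\overline\partial)$ whose class depends only on $\xi$, defining the linear map $\rho_{k}:\mathcal{A}^{k}\to H^{k+1}(\mathcal{N}_{0},\overline{\partial})$. *)

theory Defs
  imports Main "HOL.Vector_Spaces" "HOL-Library.Function_Algebras" "HOL-Library.Product_Plus"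
begin

(* Conventions.
   'r :: field  is the ground field R; 'v is an ambient R-vector space (with scalar
   multiplication scale) that contains all the bigraded pieces C p q = C^{p,q}
   (p, q >= 0; pieces with a negative index are {0} and simply do not occur).
   An element of the total space C^k = (+)_{p+q=k} C^{p,q} is represented by its
   family of components  eta :: nat => nat => 'v  (eta p q = eta_{p,q}).  *)

type_synonym 'v fam = "nat \<Rightarrow> nat \<Rightarrow> 'v"

definition lin_on :: "('r \<Rightarrow> 'a \<Rightarrow> 'a::ab_group_add) \<Rightarrow> ('r \<Rightarrow> 'b \<Rightarrow> 'b::ab_group_add)
    \<Rightarrow> 'a set \<Rightarrow> ('a \<Rightarrow> 'b) \<Rightarrow> bool" where
  "lin_on s1 s2 S f \<longleftrightarrow>
     (\<forall>x\<in>S. \<forall>y\<in>S. f (x + y) = f x + f y) \<and> (\<forall>c. \<forall>x\<in>S. f (s1 c x) = s2 c (f x))"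

definition lin_iso :: "('r \<Rightarrow> 'a \<Rightarrow> 'a::ab_group_add) \<Rightarrow> ('r \<Rightarrow> 'b \<Rightarrow> 'b::ab_group_add)
    \<Rightarrow> 'a set \<Rightarrow> 'b set \<Rightarrow> bool" where
  "lin_iso s1 s2 A B \<longleftrightarrow> (\<exists>f. lin_on s1 s2 A f \<and> bij_betw f A B)"

text \<open>Isomorphism of quotient spaces A/B and D/E (B a subspace of A, E a subspace of D),
  expressed as: some linear map f : A -> D induces a well-defined bijective map
  A/B -> D/E, i.e. f(A) + E = D and f^{-1}(E) \<inter> A = B.\<close>
definition quot_iso :: "('r \<Rightarrow> 'a \<Rightarrow> 'a::ab_group_add) \<Rightarrow> ('r \<Rightarrow> 'b \<Rightarrow> 'b::ab_group_add)
    \<Rightarrow> 'a set \<Rightarrow> 'a set \<Rightarrow> 'b set \<Rightarrow> 'b set \<Rightarrow> bool" where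
  "quot_iso s1 s2 A B D E \<longleftrightarrow>
     (\<exists>f. lin_on s1 s2 A f \<and> f ` A \<subseteq> D \<and> (\<forall>y\<in>D. \<exists>x\<in>A. y - f x \<in> E)
          \<and> (\<forall>x\<in>A. f x \<in> E \<longleftrightarrow> x \<in> B))"

definition fscale :: "('r \<Rightarrow> 'v \<Rightarrow> 'v) \<Rightarrow> 'r \<Rightarrow> 'v fam \<Rightarrow> 'v fam" where
  "fscale scale c eta = (\<lambda>p q. scale c (eta p q))"

definition pscale :: "('r \<Rightarrow> 'a \<Rightarrow> 'a) \<Rightarrow> ('r \<Rightarrow> 'b \<Rightarrow> 'b) \<Rightarrow> 'r \<Rightarrow> 'a \<times> 'b \<Rightarrow> 'a \<times> 'b" where
  "pscale s1 s2 c xy = (s1 c (fst xy), s2 c (snd xy))"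

definition cochains :: "(nat \<Rightarrow> nat \<Rightarrow> 'v::zero set) \<Rightarrow> nat \<Rightarrow> 'v fam set" where
  "cochains C k = {eta. (\<forall>p q. p + q = k \<longrightarrow> eta p q \<in> C p q) \<and> (\<forall>p q. p + q \<noteq> k \<longrightarrow> eta p q = 0)}"

text \<open>The total differential  \<partial> = \<partial>_{2,-1} + \<partial>_{1,0} + \<partial>_{0,1}  on families;
  d21 p q : C^{p,q} -> C^{p+2,q-1},  d10 p q : C^{p,q} -> C^{p+1,q},  d01 p q : C^{p,q} -> C^{p,q+1}.\<close>
definition dtot :: "(nat \<Rightarrow> nat \<Rightarrow> 'v \<Rightarrow> 'v::comm_monoid_add) \<Rightarrow> (nat \<Rightarrow> nat \<Rightarrow> 'v \<Rightarrow> 'v)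
    \<Rightarrow> (nat \<Rightarrow> nat \<Rightarrow> 'v \<Rightarrow> 'v) \<Rightarrow> 'v fam \<Rightarrow> 'v fam" where
  "dtot d21 d10 d01 eta = (\<lambda>p q.
      (if 2 \<le> p then d21 (p - 2) (q + 1) (eta (p - 2) (q + 1)) else 0)
    + (if 1 \<le> p then d10 (p - 1) q (eta (p - 1) q) else 0)
    + (if 1 \<le> q then d01 p (q - 1) (eta p (q - 1)) else 0))"

definition bigraded_complex :: "('r::field \<Rightarrow> 'v \<Rightarrow> 'v::ab_group_add) \<Rightarrow> (nat \<Rightarrow> nat \<Rightarrow> 'v set)
    \<Rightarrow> (nat \<Rightarrow> nat \<Rightarrow> 'v \<Rightarrow> 'v) \<Rightarrow> (nat \<Rightarrow> nat \<Rightarrow> 'v \<Rightarrow> 'v) \<Rightarrow> (nat \<Rightarrow> nat \<Rightarrow> 'v \<Rightarrow> 'v) \<Rightarrow> bool" where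
  "bigraded_complex scale C d21 d10 d01 \<longleftrightarrow>
     vector_space scale
   \<and> (\<forall>p q. module.subspace scale (C p q))
   \<and> (\<forall>p q. lin_on scale scale (C p q) (d21 p q)
            \<and> d21 p q ` C p q \<subseteq> (if q = 0 then {0} else C (p + 2) (q - 1)))
   \<and> (\<forall>p q. lin_on scale scale (C p q) (d10 p q) \<and> d10 p q ` C p q \<subseteq> C (p + 1) q)
   \<and> (\<forall>p q. lin_on scale scale (C p q) (d01 p q) \<and> d01 p q ` C p q \<subseteq> C p (q + 1))
   \<and> (\<forall>k. \<forall>eta\<in>cochains C k. dtot d21 d10 d01 (dtot d21 d10 d01 eta) = (\<lambda>p q. 0))"

definition pi1 :: "'v::zero fam \<Rightarrow> 'v fam" where
  "pi1 eta = (\<lambda>p q. if 1 \<le> q then eta p q else 0)"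

definition emb01 :: "'v::zero \<Rightarrow> 'v fam" where
  "emb01 x = (\<lambda>p q. if p = 0 \<and> q = 1 then x else 0)"

text \<open>The subcomplex N_0: N_0^p = ker(\<partial>_{0,1} : C^{p,0} -> C^{p,1}), differential \<partial>_{1,0}.\<close>
definition N0 :: "(nat \<Rightarrow> nat \<Rightarrow> 'v set) \<Rightarrow> (nat \<Rightarrow> nat \<Rightarrow> 'v \<Rightarrow> 'v::zero) \<Rightarrow> nat \<Rightarrow> 'v set" where
  "N0 C d01 p = {x \<in> C p 0. d01 p 0 x = 0}"

definition Z_N0 :: "(nat \<Rightarrow> nat \<Rightarrow> 'v set) \<Rightarrow> (nat \<Rightarrow> nat \<Rightarrow> 'v \<Rightarrow> 'v::zero)
    \<Rightarrow> (nat \<Rightarrow> nat \<Rightarrow> 'v \<Rightarrow> 'v) \<Rightarrow> nat \<Rightarrow> 'v set" where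
  "Z_N0 C d10 d01 k = {x \<in> N0 C d01 k. d10 k 0 x = 0}"

definition B_N0 :: "(nat \<Rightarrow> nat \<Rightarrow> 'v set) \<Rightarrow> (nat \<Rightarrow> nat \<Rightarrow> 'v \<Rightarrow> 'v::zero)
    \<Rightarrow> (nat \<Rightarrow> nat \<Rightarrow> 'v \<Rightarrow> 'v) \<Rightarrow> nat \<Rightarrow> 'v set" where
  "B_N0 C d10 d01 k = (if k = 0 then {0} else d10 (k - 1) 0 ` N0 C d01 (k - 1))"

definition Z_C where
  "Z_C C d21 d10 d01 k = {eta \<in> cochains C k. dtot d21 d10 d01 eta = (\<lambda>p q. 0)}"

definition B_C where
  "B_C C d21 d10 d01 k = (if k = 0 then {\<lambda>p q. 0} else dtot d21 d10 d01 ` cochains C (k - 1))"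

definition B1_col0 :: "(nat \<Rightarrow> nat \<Rightarrow> 'v set) \<Rightarrow> (nat \<Rightarrow> nat \<Rightarrow> 'v \<Rightarrow> 'v) \<Rightarrow> 'v set" where
  "B1_col0 C d01 = d01 0 0 ` C 0 0"

definition A_sp where
  "A_sp C d21 d10 d01 k = {pi1 eta | eta. eta \<in> cochains C k \<and> pi1 (dtot d21 d10 d01 eta) = (\<lambda>p q. 0)}"

text \<open>\<rho>_1 : A^1 -> H^2(N_0): the class (as a coset of B^2(N_0)) of
  \<partial>_{2,-1} \<xi>_{0,1} + \<partial>_{1,0} \<eta>_{1,0} for any \<eta> \<in> C^1 with \<pi>_1 \<eta> = \<xi>, \<pi>_1(\<partial>\<eta>) = 0.\<close>
definition rho1 where
  "rho1 C d21 d10 d01 xi =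
     (let eta = (SOME eta. eta \<in> cochains C 1 \<and> pi1 eta = xi \<and> pi1 (dtot d21 d10 d01 eta) = (\<lambda>p q. 0))
      in {d21 0 1 (xi 0 1) + d10 1 0 (eta 1 0) + b | b. b \<in> B_N0 C d10 d01 2})"

definition ker_rho1 where
  "ker_rho1 C d21 d10 d01 = {xi \<in> A_sp C d21 d10 d01 1. rho1 C d21 d10 d01 xi = B_N0 C d10 d01 2}"

end

theory Submission
  imports Defs
begin


lemma lin_on_0:
  assumes "lin_on s1 s2 V f" "0 \<in> V" shows "f 0 = 0"
proof -
  have "f (0+0) = f 0 + f 0" using assms unfolding lin_on_def by blast
  then show ?thesis by simp
qed

lemma lin_on_diff:
  assumes "vector_space s1" "module.subspace s1 V" "lin_on s1 s2 V f" "x \<in> V" "y \<in> V"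
  shows "f (x - y) = f x - f y"
proof -
  interpret vector_space s1 by fact
  have "x - y \<in> V" using assms subspace_diff by blast
  then have "f ((x - y) + y) = f (x - y) + f y" using assms unfolding lin_on_def by blast
  then show ?thesis by (simp add: algebra_simps)
qed

lemma section_exists:
  fixes s1 :: "'r::field \<Rightarrow> 'a::ab_group_add \<Rightarrow> 'a" and s2 :: "'r \<Rightarrow> 'b::ab_group_add \<Rightarrow> 'b"
  assumes vs1: "vector_space s1" and vs2: "vector_space s2"
    and V: "module.subspace s1 V" and V0: "module.subspace s1 V0" "V0 \<subseteq> V"
    and p: "lin_on s1 s2 V p" and W: "p ` V = W" and W0: "p ` V0 = W0"
  shows "\<exists>s. (\<forall>x y. s (x+y) = s x + s y) \<and> (\<forall>c x. s (s2 c x) = s1 c (s x))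
     \<and> (\<forall>w\<in>W. s w \<in> V \<and> p (s w) = w) \<and> (\<forall>w\<in>W0. s w \<in> V0)"
proof -
  interpret v1: vector_space s1 by fact
  interpret v2: vector_space s2 by fact
  interpret vp: vector_space_pair s2 s1 by unfold_locales
  obtain B0 where B0: "B0 \<subseteq> W0" "v2.independent B0" "W0 \<subseteq> v2.span B0"
    by (rule v2.maximal_independent_subset)
  have "W0 \<subseteq> W" using W W0 V0(2) image_mono by metis
  then have "B0 \<subseteq> W" using B0(1) by (rule order_trans[rotated])
  then obtain B where B: "B0 \<subseteq> B" "B \<subseteq> W" "v2.independent B" "W \<subseteq> v2.span B"
    by (rule v2.maximal_independent_subset_extend[OF _ B0(2)])
  define g where "g b = (if b \<in> B0 then (SOME v. v \<in> V0 \<and> p v = b) else (SOME v. v \<in> V \<and> p v = b))" for b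
  have ex0: "\<exists>v. v \<in> V0 \<and> p v = b" if "b \<in> B0" for b
    using that B0(1) unfolding W0[symmetric] by blast
  have ex: "\<exists>v. v \<in> V \<and> p v = b" if "b \<in> B" for b
    using that B(2) unfolding W[symmetric] by blast
  have g0: "g b \<in> V0 \<and> p (g b) = b" if "b \<in> B0" for b
    using someI_ex[OF ex0[OF that]] that unfolding g_def by simp
  have g: "g b \<in> V \<and> p (g b) = b" if "b \<in> B" for b
  proof (cases "b \<in> B0")
    case True
    then show ?thesis using g0 V0(2) by blast
  next
    case False
    then show ?thesis using someI_ex[OF ex[OF that]] unfolding g_def by simp
  qed
  define s where "s = vp.construct B g"
  have lin: "Vector_Spaces.linear s2 s1 s" unfolding s_def using vp.linear_construct[OF B(3)] by simp
  then have sadd: "s (x+y) = s x + s y" and sscale: "s (s2 c x) = s1 c (s x)" for x y c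
    unfolding Vector_Spaces.linear_iff by auto
  have sB: "s b = g b" if "b \<in> B" for b unfolding s_def using vp.construct_basis[OF B(3) that] .
  have p0: "p 0 = 0" using lin_on_0[OF p] V v1.subspace_0 by blast
  have s0: "s 0 = 0" using sadd[of 0 0] by simp
  have main: "s w \<in> V \<and> p (s w) = w" if "w \<in> v2.span B" for w
    using that
  proof (induction rule: v2.span_induct_alt)
    case base
    then show ?case using s0 p0 V v1.subspace_0 by simp
  next
    case (step c x y)
    have gx: "g x \<in> V" "p (g x) = x" using g step by auto
    have "s (s2 c x + y) = s1 c (g x) + s y" using sadd sscale sB step by simp
    moreover have "s1 c (g x) \<in> V" using gx V v1.subspace_scale by blast
    moreover have "p (s1 c (g x) + s y) = s2 c x + y"
      using p step gx \<open>s1 c (g x) \<in> V\<close> unfolding lin_on_def by auto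
    ultimately show ?case using V v1.subspace_add step by auto
  qed
  have main0: "s w \<in> V0" if "w \<in> v2.span B0" for w
    using that
  proof (induction rule: v2.span_induct_alt)
    case base
    then show ?case using s0 V0 v1.subspace_0 by simp
  next
    case (step c x y)
    have "s (s2 c x + y) = s1 c (g x) + s y" using sadd sscale sB step B by auto
    then show ?case using g0[OF step(1)] step(2) V0(1) v1.subspace_add v1.subspace_scale by metis
  qed
  show ?thesis
    apply (rule exI[of _ s])
    using sadd sscale main main0 B B0 by blast
qed

lemma split_iso:
  fixes s1 :: "'r::field \<Rightarrow> 'a::ab_group_add \<Rightarrow> 'a" and s2 :: "'r \<Rightarrow> 'b::ab_group_add \<Rightarrow> 'b"
    and s3 :: "'r \<Rightarrow> 'c::ab_group_add \<Rightarrow> 'c"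
  assumes vs1: "vector_space s1" and vs2: "vector_space s2"
    and V: "module.subspace s1 V" and V0: "module.subspace s1 V0" "V0 \<subseteq> V"
    and p: "lin_on s1 s2 V p" and W: "p ` V = W" and W0: "p ` V0 = W0"
    and q: "lin_on s1 s3 V q" and qi: "inj_on q {v\<in>V. p v = 0}" and K: "q ` {v\<in>V. p v = 0} = K"
  shows "\<exists>f. lin_on s1 (pscale s3 s2) V f \<and> bij_betw f V (K \<times> W)
     \<and> (\<forall>x\<in>V. f x \<in> q ` {v\<in>V0. p v = 0} \<times> W0 \<longleftrightarrow> x \<in> V0)"
proof -
  interpret v1: vector_space s1 by fact
  obtain s where sadd: "\<And>x y. s (x+y) = s x + s y" and sscale: "\<And>c x. s (s2 c x) = s1 c (s x)"
    and sW: "\<And>w. w\<in>W \<Longrightarrow> s w \<in> V \<and> p (s w) = w" and sW0: "\<And>w. w\<in>W0 \<Longrightarrow> s w \<in> V0"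
    using section_exists[OF vs1 vs2 V V0 p W W0] by blast
  have padd: "p (x + y) = p x + p y" and pscl: "p (s1 c x) = s2 c (p x)"
    and qadd: "q (x + y) = q x + q y" and qscl: "q (s1 c x) = s3 c (q x)"
    if "x \<in> V" "y \<in> V" for x y c using p q that unfolding lin_on_def by auto
  have pdiff: "p (x - y) = p x - p y" if "x \<in> V" "y \<in> V" for x y
    using lin_on_diff[OF vs1 V p that] .
  have Vadd: "x + y \<in> V" and Vdiff: "x - y \<in> V" and Vscl: "s1 c x \<in> V"
    if "x \<in> V" "y \<in> V" for x y c
    using that V v1.subspace_add v1.subspace_diff v1.subspace_scale by blast+
  have V0add: "x + y \<in> V0" and V0diff: "x - y \<in> V0"
    if "x \<in> V0" "y \<in> V0" for x y
    using that V0 v1.subspace_add v1.subspace_diff by blast+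
  have pW: "p x \<in> W" if "x \<in> V" for x using W that by blast
  define u where "u x = x - s (p x)" for x
  have uV: "u x \<in> V" and up: "p (u x) = 0" if "x \<in> V" for x
    using sW[OF pW[OF that]] that Vdiff pdiff unfolding u_def by auto
  define f where "f x = (q (u x), p x)" for x
  have "lin_on s1 (pscale s3 s2) V f"
    unfolding lin_on_def
  proof safe
    fix x y assume xy: "x \<in> V" "y \<in> V"
    have "u (x + y) = u x + u y"
      unfolding u_def using padd[OF xy] sadd by (simp add: algebra_simps)
    then show "f (x + y) = f x + f y"
      unfolding f_def using qadd[OF uV[OF xy(1)] uV[OF xy(2)]] padd[OF xy] by simp
  next
    fix c x assume x: "x \<in> V"
    have "u (s1 c x) = s1 c (u x)"
      unfolding u_def using pscl[OF x x] sscale by (simp add: v1.scale_right_diff_distrib)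
    then show "f (s1 c x) = pscale s3 s2 c (f x)"
      unfolding f_def pscale_def using qscl[OF uV[OF x] x] pscl[OF x x] by simp
  qed
  moreover have "bij_betw f V (K \<times> W)"
    unfolding bij_betw_def
  proof safe
    show "inj_on f V"
    proof (rule inj_onI)
      fix x y assume x: "x \<in> V" and y: "y \<in> V" and e: "f x = f y"
      then have pe: "p x = p y" and qe: "q (u x) = q (u y)" unfolding f_def by auto
      have "u x = u y" using inj_onD[OF qi qe] uV up x y by blast
      then show "x = y" using pe unfolding u_def by simp
    qed
  next
    fix a b x assume "(a, b) = f x" "x \<in> V"
    then show "a \<in> K" "b \<in> W" using K uV up pW unfolding f_def by auto
  next
    fix a b assume a: "a \<in> K" and b: "b \<in> W"
    then obtain v where v: "v \<in> V" "p v = 0" "a = q v" using K by blast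
    define x where "x = v + s b"
    have xV: "x \<in> V" using Vadd v sW[OF b] unfolding x_def by blast
    have px: "p x = b" using padd[OF v(1)] sW[OF b] v unfolding x_def by simp
    have "u x = v" unfolding u_def using px x_def by simp
    then have "f x = (a, b)" using px v unfolding f_def by simp
    then show "(a, b) \<in> f ` V" using xV by (metis image_eqI)
  qed
  moreover have "\<forall>x\<in>V. f x \<in> q ` {v\<in>V0. p v = 0} \<times> W0 \<longleftrightarrow> x \<in> V0"
  proof (intro ballI iffI)
    fix x assume x: "x \<in> V" and fx: "f x \<in> q ` {v\<in>V0. p v = 0} \<times> W0"
    then have pW0: "p x \<in> W0" and "q (u x) \<in> q ` {v\<in>V0. p v = 0}" unfolding f_def by auto
    then obtain v where v: "v \<in> V0" "p v = 0" "q (u x) = q v" by blast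
    have "u x = v" using inj_onD[OF qi v(3)] uV[OF x] up[OF x] v V0(2) by blast
    then have "x = v + s (p x)" unfolding u_def by (simp add: algebra_simps)
    then show "x \<in> V0" using V0add v(1) sW0[OF pW0] by metis
  next
    fix x assume "x \<in> V" and x: "x \<in> V0"
    then have xV: "x \<in> V" using V0 by blast
    have pW0: "p x \<in> W0" using W0 x by blast
    have "u x \<in> V0" unfolding u_def using V0diff x sW0[OF pW0] by blast
    then show "f x \<in> q ` {v\<in>V0. p v = 0} \<times> W0"
      unfolding f_def using pW0 up[OF xV] by blast
  qed
  ultimately show ?thesis by blast
qed



locale bgc =
  fixes scale :: "'r::field \<Rightarrow> 'v \<Rightarrow> 'v::ab_group_add"
    and C :: "nat \<Rightarrow> nat \<Rightarrow> 'v set"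
    and d21 d10 d01 :: "nat \<Rightarrow> nat \<Rightarrow> 'v \<Rightarrow> 'v"
  assumes bc: "bigraded_complex scale C d21 d10 d01"
begin

lemmas bcC = bc[unfolded bigraded_complex_def]
lemmas bcD = bcC[THEN conjunct1] bcC[THEN conjunct2, THEN conjunct1]
  bcC[THEN conjunct2, THEN conjunct2, THEN conjunct1]
  bcC[THEN conjunct2, THEN conjunct2, THEN conjunct2, THEN conjunct1]
  bcC[THEN conjunct2, THEN conjunct2, THEN conjunct2, THEN conjunct2, THEN conjunct1]
  bcC[THEN conjunct2, THEN conjunct2, THEN conjunct2, THEN conjunct2, THEN conjunct2]

lemma vs: "vector_space scale" by (rule bcD(1))
lemma md: "module scale" using vs by (simp add: vector_space_def module_def)

lemma sc0[simp]: "scale c 0 = 0" using module.scale_zero_right[OF md] .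

lemma subC: "module.subspace scale (C p q)" using bcD(2) by blast

lemma C0[simp]: "0 \<in> C p q" using subC module.subspace_0[OF md] by blast
lemma Cadd: "x \<in> C p q \<Longrightarrow> y \<in> C p q \<Longrightarrow> x + y \<in> C p q" using subC module.subspace_add[OF md] by blast
lemma Cdiff: "x \<in> C p q \<Longrightarrow> y \<in> C p q \<Longrightarrow> x - y \<in> C p q" using subC module.subspace_diff[OF md] by blast
lemma Cneg: "x \<in> C p q \<Longrightarrow> - x \<in> C p q" using subC module.subspace_neg[OF md] by blast
lemma Cscale: "x \<in> C p q \<Longrightarrow> scale c x \<in> C p q" using subC module.subspace_scale[OF md] by blast

lemma lin21: "lin_on scale scale (C p q) (d21 p q)" using bcD(3) by blast
lemma lin10: "lin_on scale scale (C p q) (d10 p q)" using bcD(4) by blast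
lemma lin01: "lin_on scale scale (C p q) (d01 p q)" using bcD(5) by blast

lemma map10: "x \<in> C p q \<Longrightarrow> d10 p q x \<in> C (p+1) q" using bcD(4) by blast
lemma map01: "x \<in> C p q \<Longrightarrow> d01 p q x \<in> C p (q+1)" using bcD(5) by blast
lemma dd: "eta \<in> cochains C k \<Longrightarrow> dtot d21 d10 d01 (dtot d21 d10 d01 eta) = (\<lambda>p q. 0)" using bcD(6) by blast

lemma d21_0[simp]: "d21 p q 0 = 0" using lin_on_0[OF lin21] by simp
lemma d10_0[simp]: "d10 p q 0 = 0" using lin_on_0[OF lin10] by simp
lemma d01_0[simp]: "d01 p q 0 = 0" using lin_on_0[OF lin01] by simp

lemma add21: "x \<in> C p q \<Longrightarrow> y \<in> C p q \<Longrightarrow> d21 p q (x + y) = d21 p q x + d21 p q y"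
  using lin21 unfolding lin_on_def by blast
lemma add10: "x \<in> C p q \<Longrightarrow> y \<in> C p q \<Longrightarrow> d10 p q (x + y) = d10 p q x + d10 p q y"
  using lin10 unfolding lin_on_def by blast
lemma add01: "x \<in> C p q \<Longrightarrow> y \<in> C p q \<Longrightarrow> d01 p q (x + y) = d01 p q x + d01 p q y"
  using lin01 unfolding lin_on_def by blast
lemma scl21: "x \<in> C p q \<Longrightarrow> d21 p q (scale c x) = scale c (d21 p q x)"
  using lin21 unfolding lin_on_def by blast
lemma scl10: "x \<in> C p q \<Longrightarrow> d10 p q (scale c x) = scale c (d10 p q x)"
  using lin10 unfolding lin_on_def by blast
lemma scl01: "x \<in> C p q \<Longrightarrow> d01 p q (scale c x) = scale c (d01 p q x)"
  using lin01 unfolding lin_on_def by blast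
lemma diff21: "x \<in> C p q \<Longrightarrow> y \<in> C p q \<Longrightarrow> d21 p q (x - y) = d21 p q x - d21 p q y"
  using lin_on_diff[OF vs subC lin21] by blast
lemma diff10: "x \<in> C p q \<Longrightarrow> y \<in> C p q \<Longrightarrow> d10 p q (x - y) = d10 p q x - d10 p q y"
  using lin_on_diff[OF vs subC lin10] by blast
lemma diff01: "x \<in> C p q \<Longrightarrow> y \<in> C p q \<Longrightarrow> d01 p q (x - y) = d01 p q x - d01 p q y"
  using lin_on_diff[OF vs subC lin01] by blast

lemma fvs: "vector_space (fscale scale)"
  unfolding vector_space_def module_def fscale_def
  by (auto simp: fun_eq_iff module.scale_right_distrib[OF md] module.scale_left_distrib[OF md] module.scale_scale[OF md] module.scale_one[OF md])

lemma fmd: "module (fscale scale)" using fvs by (simp add: vector_space_def module_def)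

definition mk :: "'v \<Rightarrow> 'v \<Rightarrow> 'v fam" where
  "mk a b = (\<lambda>p q. if p = 1 \<and> q = 0 then a else if p = 0 \<and> q = 1 then b else 0)"

lemma mk_10[simp]: "mk a b 1 0 = a" and mk_01[simp]: "mk a b 0 1 = b"
  unfolding mk_def by auto

lemma mk_eq[simp]: "mk a b = mk a' b' \<longleftrightarrow> a = a' \<and> b = b'"
  by (metis mk_10 mk_01)

lemma mk_add: "mk a b + mk a' b' = mk (a + a') (b + b')"
  unfolding mk_def by (auto simp: fun_eq_iff)

lemma mk_scale: "fscale scale c (mk a b) = mk (scale c a) (scale c b)"
  unfolding mk_def fscale_def by (auto simp: fun_eq_iff)

lemma mk_0: "mk 0 0 = 0"
  unfolding mk_def by (auto simp: fun_eq_iff)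

lemma mk_diff: "mk a b - mk a' b' = mk (a - a') (b - b')"
  unfolding mk_def by (auto simp: fun_eq_iff)

lemma pi1_mk: "pi1 (mk a b) = emb01 b"
  unfolding mk_def pi1_def emb01_def by (auto simp: fun_eq_iff)

lemma emb01_01[simp]: "emb01 b 0 1 = b" unfolding emb01_def by simp

lemma emb01_01'[simp]: "emb01 b 0 (Suc 0) = b" unfolding emb01_def by simp
lemma mk_10'[simp]: "mk a b (Suc 0) 0 = a" and mk_01'[simp]: "mk a b 0 (Suc 0) = b"
  unfolding mk_def by auto

lemma emb01_eq[simp]: "emb01 b = emb01 b' \<longleftrightarrow> b = b'"
  by (metis emb01_01)

lemma emb01_0: "emb01 0 = 0"
  unfolding emb01_def by (auto simp: fun_eq_iff)

lemma emb01_eq0[simp]: "emb01 b = 0 \<longleftrightarrow> b = 0" by (metis emb01_0 emb01_eq)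

lemma cochains1: "cochains C 1 = {mk a b | a b. a \<in> C 1 0 \<and> b \<in> C 0 1}"
proof (intro set_eqI iffI)
  fix eta assume e: "eta \<in> cochains C 1"
  have "eta = mk (eta 1 0) (eta 0 1)"
  proof (rule ext, rule ext)
    fix p q show "eta p q = mk (eta 1 0) (eta 0 1) p q"
      using e unfolding cochains_def mk_def by auto
  qed
  moreover have "eta 1 0 \<in> C 1 0" "eta 0 1 \<in> C 0 1" using e unfolding cochains_def by auto
  ultimately show "eta \<in> {mk a b | a b. a \<in> C 1 0 \<and> b \<in> C 0 1}" by blast
next
  fix eta assume "eta \<in> {mk a b | a b. a \<in> C 1 0 \<and> b \<in> C 0 1}"
  then obtain a b where "eta = mk a b" "a \<in> C 1 0" "b \<in> C 0 1" by blast
  then show "eta \<in> cochains C 1" unfolding cochains_def mk_def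
    by (auto simp: add_is_1)
qed

lemma cochains0: "cochains C 0 = {(\<lambda>p q. if p = 0 \<and> q = 0 then x else 0) | x. x \<in> C 0 0}"
proof (intro set_eqI iffI)
  fix eta assume e: "eta \<in> cochains C 0"
  have "eta = (\<lambda>p q. if p = 0 \<and> q = 0 then eta 0 0 else 0)"
    using e unfolding cochains_def by (auto simp: fun_eq_iff)
  moreover have "eta 0 0 \<in> C 0 0" using e unfolding cochains_def by auto
  ultimately show "eta \<in> {(\<lambda>p q. if p = 0 \<and> q = 0 then x else 0) | x. x \<in> C 0 0}" by blast
qed (auto simp: cochains_def)

lemma dtot0: "dtot d21 d10 d01 (\<lambda>p q. if p = 0 \<and> q = 0 then x else 0) = mk (d10 0 0 x) (d01 0 0 x)"
  unfolding dtot_def mk_def by (auto simp: fun_eq_iff)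

lemma T1: "(if 2 \<le> p then d21 (p - 2) (q + 1) (mk a b (p - 2) (q + 1)) else 0) = (if p = 2 \<and> q = 0 then d21 0 1 b else 0)"
  unfolding mk_def by (cases "p = 2") auto
lemma T2: "(if 1 \<le> p then d10 (p - 1) q (mk a b (p - 1) q) else 0) = (if p = 2 \<and> q = 0 then d10 1 0 a else if p = 1 \<and> q = 1 then d10 0 1 b else 0)"
  unfolding mk_def by (cases "p = 2"; cases "p = 1") auto
lemma T3: "(if 1 \<le> q then d01 p (q - 1) (mk a b p (q - 1)) else 0) = (if p = 1 \<and> q = 1 then d01 1 0 a else if p = 0 \<and> q = 2 then d01 0 1 b else 0)"
  unfolding mk_def by (cases "q = 1"; cases "q = 2") auto

lemma dtot_mk: "dtot d21 d10 d01 (mk a b) = (\<lambda>p q. if p = 2 \<and> q = 0 then d21 0 1 b + d10 1 0 a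
   else if p = 1 \<and> q = 1 then d10 0 1 b + d01 1 0 a else if p = 0 \<and> q = 2 then d01 0 1 b else 0)"
proof (intro ext)
  fix p q
  have "dtot d21 d10 d01 (mk a b) p q = (if p = 2 \<and> q = 0 then d21 0 1 b else 0) + (if p = 2 \<and> q = 0 then d10 1 0 a else if p = 1 \<and> q = 1 then d10 0 1 b else 0) + (if p = 1 \<and> q = 1 then d01 1 0 a else if p = 0 \<and> q = 2 then d01 0 1 b else 0)"
    unfolding dtot_def by (simp only: T1 T2 T3)
  then show "dtot d21 d10 d01 (mk a b) p q = (if p = 2 \<and> q = 0 then d21 0 1 b + d10 1 0 a
   else if p = 1 \<and> q = 1 then d10 0 1 b + d01 1 0 a else if p = 0 \<and> q = 2 then d01 0 1 b else 0)"
    by simp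
qed

lemma add4: "((x1::'a::ab_semigroup_add) + x2) + (y1 + y2) = (x1 + y1) + (x2 + y2)"
  by (simp add: ac_simps)

lemma dmk0: "dtot d21 d10 d01 (mk a b) = (\<lambda>p q. 0) \<longleftrightarrow>
   (d01 0 1 b = 0 \<and> d10 0 1 b + d01 1 0 a = 0 \<and> d21 0 1 b + d10 1 0 a = 0)"
proof
  assume h: "dtot d21 d10 d01 (mk a b) = (\<lambda>p q. 0)"
  have "dtot d21 d10 d01 (mk a b) 2 0 = 0" "dtot d21 d10 d01 (mk a b) 1 1 = 0"
    "dtot d21 d10 d01 (mk a b) 0 2 = 0" using h by simp_all
  then show "d01 0 1 b = 0 \<and> d10 0 1 b + d01 1 0 a = 0 \<and> d21 0 1 b + d10 1 0 a = 0"
    unfolding dtot_mk by simp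
qed (auto simp: dtot_mk fun_eq_iff)

lemma pi1dmk0: "pi1 (dtot d21 d10 d01 (mk a b)) = (\<lambda>p q. 0) \<longleftrightarrow>
   (d01 0 1 b = 0 \<and> d10 0 1 b + d01 1 0 a = 0)"
proof
  assume h: "pi1 (dtot d21 d10 d01 (mk a b)) = (\<lambda>p q. 0)"
  have "pi1 (dtot d21 d10 d01 (mk a b)) 1 1 = 0"
    "pi1 (dtot d21 d10 d01 (mk a b)) 0 2 = 0" using h by simp_all
  then show "d01 0 1 b = 0 \<and> d10 0 1 b + d01 1 0 a = 0"
    unfolding dtot_mk pi1_def by simp
qed (auto simp: dtot_mk fun_eq_iff pi1_def)

lemma B1_char: "B_C C d21 d10 d01 1 = {mk (d10 0 0 x) (d01 0 0 x) | x. x \<in> C 0 0}"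
proof -
  have "B_C C d21 d10 d01 1 = dtot d21 d10 d01 ` cochains C 0" by (simp add: B_C_def)
  also have "\<dots> = {mk (d10 0 0 x) (d01 0 0 x) | x. x \<in> C 0 0}"
    unfolding cochains0
  proof (intro set_eqI iffI)
    fix y assume "y \<in> {mk (d10 0 0 x) (d01 0 0 x) | x. x \<in> C 0 0}"
    then obtain x where y: "y = mk (d10 0 0 x) (d01 0 0 x)" "x \<in> C 0 0" by blast
    show "y \<in> dtot d21 d10 d01 ` {(\<lambda>p q. if p = 0 \<and> q = 0 then x else 0) | x. x \<in> C 0 0}"
      by (rule image_eqI[where x="\<lambda>p q. if p = 0 \<and> q = 0 then x else 0"]) (use y in \<open>auto simp: dtot0\<close>)
  qed (auto simp: dtot0)
  finally show ?thesis .
qed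

lemma Z1_char: "Z_C C d21 d10 d01 1 = {mk a b | a b. a \<in> C 1 0 \<and> b \<in> C 0 1 \<and>
   d01 0 1 b = 0 \<and> d10 0 1 b + d01 1 0 a = 0 \<and> d21 0 1 b + d10 1 0 a = 0}"
  unfolding Z_C_def cochains1 using dmk0 by auto

lemma BN2: "B_N0 C d10 d01 2 = d10 1 0 ` {x \<in> C 1 0. d01 1 0 x = 0}"
  unfolding B_N0_def N0_def by simp

lemma BN2_add: "x \<in> B_N0 C d10 d01 2 \<Longrightarrow> y \<in> B_N0 C d10 d01 2 \<Longrightarrow> x + y \<in> B_N0 C d10 d01 2"
  unfolding BN2
proof safe
  fix u v assume u: "u \<in> C 1 0" "d01 1 0 u = 0" and v: "v \<in> C 1 0" "d01 1 0 v = 0"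
  have "d10 1 0 u + d10 1 0 v = d10 1 0 (u + v)" using add10 u v by simp
  moreover have "u + v \<in> C 1 0" "d01 1 0 (u + v) = 0" using u v add01 Cadd by auto
  ultimately show "d10 1 0 u + d10 1 0 v \<in> d10 1 0 ` {x \<in> C 1 0. d01 1 0 x = 0}" by blast
qed

lemma BN2_neg: "x \<in> B_N0 C d10 d01 2 \<Longrightarrow> - x \<in> B_N0 C d10 d01 2"
  unfolding BN2
proof safe
  fix u assume u: "u \<in> C 1 0" "d01 1 0 u = 0"
  have "- d10 1 0 u = d10 1 0 (0 - u)" using diff10[of 0 1 0 u] u by simp
  moreover have "0 - u \<in> C 1 0" "d01 1 0 (0 - u) = 0" using u diff01[of 0 1 0 u] Cdiff[of 0 1 0 u] by auto
  ultimately show "- d10 1 0 u \<in> d10 1 0 ` {x \<in> C 1 0. d01 1 0 x = 0}" by blast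
qed

lemma BN2_0: "0 \<in> B_N0 C d10 d01 2"
  unfolding BN2 by (rule image_eqI[of _ _ 0]) auto

lemma coset: "{c + b | b. b \<in> B_N0 C d10 d01 2} = B_N0 C d10 d01 2 \<longleftrightarrow> c \<in> B_N0 C d10 d01 2"
proof
  assume "{c + b | b. b \<in> B_N0 C d10 d01 2} = B_N0 C d10 d01 2"
  moreover have "c + 0 \<in> {c + b | b. b \<in> B_N0 C d10 d01 2}" using BN2_0 by blast
  ultimately show "c \<in> B_N0 C d10 d01 2" by simp
next
  assume c: "c \<in> B_N0 C d10 d01 2"
  show "{c + b | b. b \<in> B_N0 C d10 d01 2} = B_N0 C d10 d01 2"
  proof (intro set_eqI iffI)
    fix x assume "x \<in> {c + b | b. b \<in> B_N0 C d10 d01 2}"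
    then show "x \<in> B_N0 C d10 d01 2" using BN2_add c by blast
  next
    fix x assume x: "x \<in> B_N0 C d10 d01 2"
    have "x = c + (- c + x)" by simp
    moreover have "- c + x \<in> B_N0 C d10 d01 2" using BN2_add BN2_neg c x by blast
    ultimately show "x \<in> {c + b | b. b \<in> B_N0 C d10 d01 2}" by blast
  qed
qed

lemma ker_rho1_char: "ker_rho1 C d21 d10 d01 = pi1 ` Z_C C d21 d10 d01 1"
proof (intro set_eqI iffI)
  fix xi assume "xi \<in> ker_rho1 C d21 d10 d01"
  then have A: "xi \<in> A_sp C d21 d10 d01 1" and R: "rho1 C d21 d10 d01 xi = B_N0 C d10 d01 2"
    unfolding ker_rho1_def by auto
  define P where "P eta = (eta \<in> cochains C 1 \<and> pi1 eta = xi \<and> pi1 (dtot d21 d10 d01 eta) = (\<lambda>p q. 0))" for eta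
  have ex: "\<exists>eta. P eta" using A unfolding A_sp_def P_def by blast
  define e where "e = (SOME eta. eta \<in> cochains C 1 \<and> pi1 eta = xi \<and> pi1 (dtot d21 d10 d01 eta) = (\<lambda>p q. 0))"
  have Pe: "P e" unfolding e_def using someI_ex[OF ex] unfolding P_def .
  then obtain a b where e: "e = mk a b" "a \<in> C 1 0" "b \<in> C 0 1" unfolding P_def cochains1 by blast
  have c1: "d01 0 1 b = 0" "d10 0 1 b + d01 1 0 a = 0" using Pe e pi1dmk0 unfolding P_def by auto
  have xi: "xi = emb01 b" using Pe e pi1_mk unfolding P_def by auto
  have "rho1 C d21 d10 d01 xi = {d21 0 1 (xi 0 1) + d10 1 0 (e 1 0) + b | b. b \<in> B_N0 C d10 d01 2}"
    unfolding rho1_def e_def Let_def by simp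
  then have "{(d21 0 1 b + d10 1 0 a) + bb | bb. bb \<in> B_N0 C d10 d01 2} = B_N0 C d10 d01 2"
    using R xi e by simp
  then have "d21 0 1 b + d10 1 0 a \<in> B_N0 C d10 d01 2" using coset by blast
  then obtain n where n: "n \<in> C 1 0" "d01 1 0 n = 0" "d21 0 1 b + d10 1 0 a = d10 1 0 n"
    unfolding BN2 by blast
  have "mk (a - n) b \<in> Z_C C d21 d10 d01 1"
    unfolding Z1_char
  proof (intro CollectI exI conjI)
    show "mk (a - n) b = mk (a - n) b" "a - n \<in> C 1 0" "b \<in> C 0 1" "d01 0 1 b = 0"
      using e n c1 Cdiff by auto
    show "d10 0 1 b + d01 1 0 (a - n) = 0" using diff01[OF e(2) n(1)] n(2) c1(2) by simp
    have "d21 0 1 b + d10 1 0 (a - n) = (d21 0 1 b + d10 1 0 a) - d10 1 0 n"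
      unfolding diff10[OF e(2) n(1)] by (rule add_diff_eq)
    then show "d21 0 1 b + d10 1 0 (a - n) = 0" using n(3) by (metis diff_self)
  qed
  moreover have "pi1 (mk (a - n) b) = xi" using xi pi1_mk by simp
  ultimately show "xi \<in> pi1 ` Z_C C d21 d10 d01 1" by (metis image_eqI)
next
  fix xi assume "xi \<in> pi1 ` Z_C C d21 d10 d01 1"
  then obtain a b where xi: "xi = emb01 b" and ab: "a \<in> C 1 0" "b \<in> C 0 1"
    "d01 0 1 b = 0" "d10 0 1 b + d01 1 0 a = 0" "d21 0 1 b + d10 1 0 a = 0"
    unfolding Z1_char using pi1_mk by auto
  have mkc: "mk a b \<in> cochains C 1" using ab unfolding cochains1 by blast
  have pmk: "pi1 (dtot d21 d10 d01 (mk a b)) = (\<lambda>p q. 0)" using ab pi1dmk0 by simp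
  have A: "xi \<in> A_sp C d21 d10 d01 1" unfolding A_sp_def
    using mkc pmk xi pi1_mk[of a b, symmetric] by blast
  define P where "P eta = (eta \<in> cochains C 1 \<and> pi1 eta = xi \<and> pi1 (dtot d21 d10 d01 eta) = (\<lambda>p q. 0))" for eta
  have ex: "\<exists>eta. P eta" using mkc pmk xi pi1_mk unfolding P_def by auto
  define e where "e = (SOME eta. eta \<in> cochains C 1 \<and> pi1 eta = xi \<and> pi1 (dtot d21 d10 d01 eta) = (\<lambda>p q. 0))"
  have Pe: "P e" unfolding e_def using someI_ex[OF ex] unfolding P_def .
  then obtain a' b' where e: "e = mk a' b'" "a' \<in> C 1 0" "b' \<in> C 0 1" unfolding P_def cochains1 by blast
  have c1: "d10 0 1 b' + d01 1 0 a' = 0" using Pe e pi1dmk0 unfolding P_def by auto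
  have "emb01 b' = emb01 b" using Pe e pi1_mk xi unfolding P_def by auto
  then have bb: "b' = b" by simp
  have "rho1 C d21 d10 d01 xi = {d21 0 1 (xi 0 1) + d10 1 0 (e 1 0) + b | b. b \<in> B_N0 C d10 d01 2}"
    unfolding rho1_def e_def Let_def by simp
  also have "\<dots> = {(d21 0 1 b + d10 1 0 a') + bb | bb. bb \<in> B_N0 C d10 d01 2}"
    using xi e by simp
  also have "\<dots> = B_N0 C d10 d01 2"
  proof (rule coset[THEN iffD2])
    have d: "d01 1 0 (a' - a) = 0" using diff01[OF e(2) ab(1)] c1 ab(4) bb
      by (simp add: eq_neg_iff_add_eq_0[symmetric])
    have m: "d21 0 1 b = - d10 1 0 a" using ab(5) by (simp add: eq_neg_iff_add_eq_0)
    have "d21 0 1 b + d10 1 0 a' = d10 1 0 (a' - a)" unfolding m diff10[OF e(2) ab(1)] by simp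
    then show "d21 0 1 b + d10 1 0 a' \<in> B_N0 C d10 d01 2"
      unfolding BN2 using d Cdiff[OF e(2) ab(1)] by blast
  qed
  finally show "xi \<in> ker_rho1 C d21 d10 d01" unfolding ker_rho1_def using A by blast
qed

lemma sub_Z1: "module.subspace (fscale scale) (Z_C C d21 d10 d01 1)"
  unfolding module.subspace_def[OF fmd] Z1_char
proof (intro conjI ballI allI)
  show "0 \<in> {mk a b | a b. a \<in> C 1 0 \<and> b \<in> C 0 1 \<and>
   d01 0 1 b = 0 \<and> d10 0 1 b + d01 1 0 a = 0 \<and> d21 0 1 b + d10 1 0 a = 0}"
    using mk_0 by force
next
  fix x y assume "x \<in> {mk a b | a b. a \<in> C 1 0 \<and> b \<in> C 0 1 \<and>
   d01 0 1 b = 0 \<and> d10 0 1 b + d01 1 0 a = 0 \<and> d21 0 1 b + d10 1 0 a = 0}"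
    "y \<in> {mk a b | a b. a \<in> C 1 0 \<and> b \<in> C 0 1 \<and>
   d01 0 1 b = 0 \<and> d10 0 1 b + d01 1 0 a = 0 \<and> d21 0 1 b + d10 1 0 a = 0}"
  then obtain a b a' b' where x: "x = mk a b" "a \<in> C 1 0" "b \<in> C 0 1"
   "d01 0 1 b = 0" "d10 0 1 b + d01 1 0 a = 0" "d21 0 1 b + d10 1 0 a = 0"
   and y: "y = mk a' b'" "a' \<in> C 1 0" "b' \<in> C 0 1"
   "d01 0 1 b' = 0" "d10 0 1 b' + d01 1 0 a' = 0" "d21 0 1 b' + d10 1 0 a' = 0" by blast
  have "x + y = mk (a + a') (b + b')" using x y mk_add by simp
  moreover have "d01 0 1 (b + b') = 0" using add01[OF x(3) y(3)] x y by simp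
  moreover have "d10 0 1 (b + b') + d01 1 0 (a + a') = 0"
    unfolding add01[OF x(2) y(2)] add10[OF x(3) y(3)] add4 using x(5) y(5) by simp
  moreover have "d21 0 1 (b + b') + d10 1 0 (a + a') = 0"
    unfolding add21[OF x(3) y(3)] add10[OF x(2) y(2)] add4 using x(6) y(6) by simp
  moreover have "a + a' \<in> C 1 0" "b + b' \<in> C 0 1" using x y Cadd by auto
  ultimately show "x + y \<in> {mk a b | a b. a \<in> C 1 0 \<and> b \<in> C 0 1 \<and>
   d01 0 1 b = 0 \<and> d10 0 1 b + d01 1 0 a = 0 \<and> d21 0 1 b + d10 1 0 a = 0}"
    by blast
next
  fix c x assume "x \<in> {mk a b | a b. a \<in> C 1 0 \<and> b \<in> C 0 1 \<and>
   d01 0 1 b = 0 \<and> d10 0 1 b + d01 1 0 a = 0 \<and> d21 0 1 b + d10 1 0 a = 0}"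
  then obtain a b where x: "x = mk a b" "a \<in> C 1 0" "b \<in> C 0 1"
   "d01 0 1 b = 0" "d10 0 1 b + d01 1 0 a = 0" "d21 0 1 b + d10 1 0 a = 0" by blast
  have "fscale scale c x = mk (scale c a) (scale c b)" using x mk_scale by simp
  moreover have "d01 0 1 (scale c b) = 0" using scl01[OF x(3)] x by simp
  moreover have "d10 0 1 (scale c b) + d01 1 0 (scale c a) = 0"
    unfolding scl01[OF x(2)] scl10[OF x(3)] module.scale_right_distrib[OF md, symmetric] using x(5) by simp
  moreover have "d21 0 1 (scale c b) + d10 1 0 (scale c a) = 0"
    unfolding scl21[OF x(3)] scl10[OF x(2)] module.scale_right_distrib[OF md, symmetric] using x(6) by simp
  moreover have "scale c a \<in> C 1 0" "scale c b \<in> C 0 1" using x Cscale by auto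
  ultimately show "fscale scale c x \<in> {mk a b | a b. a \<in> C 1 0 \<and> b \<in> C 0 1 \<and>
   d01 0 1 b = 0 \<and> d10 0 1 b + d01 1 0 a = 0 \<and> d21 0 1 b + d10 1 0 a = 0}"
    by blast
qed

lemma sub_B1: "module.subspace (fscale scale) (B_C C d21 d10 d01 1)"
  unfolding module.subspace_def[OF fmd] B1_char
proof (intro conjI ballI allI)
  have "0 = mk (d10 0 0 0) (d01 0 0 0)" by (simp add: mk_0)
  then show "0 \<in> {mk (d10 0 0 x) (d01 0 0 x) | x. x \<in> C 0 0}"
    using C0 by blast
next
  fix x y assume "x \<in> {mk (d10 0 0 x) (d01 0 0 x) | x. x \<in> C 0 0}"
    "y \<in> {mk (d10 0 0 x) (d01 0 0 x) | x. x \<in> C 0 0}"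
  then obtain u v where x: "x = mk (d10 0 0 u) (d01 0 0 u)" "u \<in> C 0 0"
    and y: "y = mk (d10 0 0 v) (d01 0 0 v)" "v \<in> C 0 0" by blast
  have "x + y = mk (d10 0 0 (u + v)) (d01 0 0 (u + v))"
    using x y mk_add add10 add01 by simp
  moreover have "u + v \<in> C 0 0" using x y Cadd by auto
  ultimately show "x + y \<in> {mk (d10 0 0 x) (d01 0 0 x) | x. x \<in> C 0 0}" by blast
next
  fix c x assume "x \<in> {mk (d10 0 0 x) (d01 0 0 x) | x. x \<in> C 0 0}"
  then obtain u where x: "x = mk (d10 0 0 u) (d01 0 0 u)" "u \<in> C 0 0" by blast
  have "fscale scale c x = mk (d10 0 0 (scale c u)) (d01 0 0 (scale c u))"
    using x mk_scale scl10 scl01 by simp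
  moreover have "scale c u \<in> C 0 0" using x Cscale by auto
  ultimately show "fscale scale c x \<in> {mk (d10 0 0 x) (d01 0 0 x) | x. x \<in> C 0 0}" by blast
qed

lemma B1_sub_Z1: "B_C C d21 d10 d01 1 \<subseteq> Z_C C d21 d10 d01 1"
proof
  fix y assume "y \<in> B_C C d21 d10 d01 1"
  then obtain x where y: "y = mk (d10 0 0 x) (d01 0 0 x)" "x \<in> C 0 0" unfolding B1_char by blast
  have c0: "(\<lambda>p q. if p = 0 \<and> q = 0 then x else 0) \<in> cochains C 0" unfolding cochains0 using y by blast
  have "y \<in> cochains C 1" unfolding cochains1 using y map10 map01 by fastforce
  moreover have "dtot d21 d10 d01 y = (\<lambda>p q. 0)" using dd[OF c0] y dtot0 by simp
  ultimately show "y \<in> Z_C C d21 d10 d01 1" unfolding Z_C_def by blast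
qed

lemma lin_pi1: "lin_on (fscale scale) (fscale scale) S pi1"
  unfolding lin_on_def pi1_def fscale_def by (auto simp: fun_eq_iff)

lemma lin_10: "lin_on (fscale scale) scale S (\<lambda>eta. eta 1 0)"
  unfolding lin_on_def fscale_def by auto

lemma lin_01: "lin_on (fscale scale) scale S (\<lambda>eta. eta 0 1)"
  unfolding lin_on_def fscale_def by auto

lemma B1_char': "B_C C d21 d10 d01 1 = (\<lambda>x. mk (d10 0 0 x) (d01 0 0 x)) ` C 0 0"
  unfolding B1_char by blast

lemma pi1_B1: "pi1 ` B_C C d21 d10 d01 1 = emb01 ` B1_col0 C d01"
  unfolding B1_char' B1_col0_def image_image pi1_mk by (rule refl)

lemma p01_B1: "(\<lambda>eta. eta 0 1) ` B_C C d21 d10 d01 1 = B1_col0 C d01"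
  unfolding B1_char' B1_col0_def image_image mk_01 by (rule refl)

lemma BN1: "B_N0 C d10 d01 1 = d10 0 0 ` {x \<in> C 0 0. d01 0 0 x = 0}"
  unfolding B_N0_def N0_def by simp

lemma q_B1': "(\<lambda>eta. eta 1 0) ` {v \<in> B_C C d21 d10 d01 1. v 0 1 = 0} = B_N0 C d10 d01 1"
proof -
  have "{v \<in> B_C C d21 d10 d01 1. v 0 1 = 0} = (\<lambda>x. mk (d10 0 0 x) (d01 0 0 x)) ` {x \<in> C 0 0. d01 0 0 x = 0}"
    unfolding B1_char' by auto
  then show ?thesis unfolding BN1 by (simp add: image_image)
qed

lemma q_B1: "(\<lambda>eta. eta 1 0) ` {v \<in> B_C C d21 d10 d01 1. pi1 v = 0} = B_N0 C d10 d01 1"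
proof -
  have "{v \<in> B_C C d21 d10 d01 1. pi1 v = 0} = {v \<in> B_C C d21 d10 d01 1. v 0 1 = 0}"
    unfolding B1_char' using pi1_mk emb01_eq0 by auto
  then show ?thesis using q_B1' by simp
qed

lemma inj_B1: "inj_on (\<lambda>eta. eta 1 0) {v \<in> B_C C d21 d10 d01 1. v 0 1 = 0}"
  unfolding B1_char by (auto intro!: inj_onI)

lemma inj_Z1: "inj_on (\<lambda>eta. eta 1 0) {v \<in> Z_C C d21 d10 d01 1. pi1 v = 0}"
  unfolding Z1_char using pi1_mk emb01_eq0 by (auto intro!: inj_onI)

lemma q_Z1: "(\<lambda>eta. eta 1 0) ` {v \<in> Z_C C d21 d10 d01 1. pi1 v = 0} = Z_N0 C d10 d01 1"
proof (intro set_eqI iffI)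
  fix x assume "x \<in> (\<lambda>eta. eta 1 0) ` {v \<in> Z_C C d21 d10 d01 1. pi1 v = 0}"
  then obtain a b where "x = a" "a \<in> C 1 0" "b = 0" "d10 0 1 b + d01 1 0 a = 0" "d21 0 1 b + d10 1 0 a = 0"
    unfolding Z1_char using pi1_mk emb01_eq0 by auto
  then show "x \<in> Z_N0 C d10 d01 1" unfolding Z_N0_def N0_def by simp
next
  fix x assume "x \<in> Z_N0 C d10 d01 1"
  then have x: "x \<in> C 1 0" "d01 1 0 x = 0" "d10 1 0 x = 0" unfolding Z_N0_def N0_def by auto
  have "mk x 0 \<in> Z_C C d21 d10 d01 1" unfolding Z1_char using x by force
  moreover have "pi1 (mk x 0) = 0" using pi1_mk emb01_0 by simp
  ultimately show "x \<in> (\<lambda>eta. eta 1 0) ` {v \<in> Z_C C d21 d10 d01 1. pi1 v = 0}"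
    by (metis (mono_tags, lifting) image_eqI mem_Collect_eq mk_10)
qed

lemma zero_E: "(0::'v \<times> 'v fam) \<in> B_N0 C d10 d01 1 \<times> emb01 ` B1_col0 C d01"
proof -
  have "(0::'v) \<in> B_N0 C d10 d01 1" unfolding BN1 by (rule image_eqI[of _ _ 0]) auto
  moreover have "(0::'v fam) \<in> emb01 ` B1_col0 C d01" unfolding B1_col0_def
    by (rule image_eqI[of _ _ 0]) (auto simp: emb01_0 intro: image_eqI[of _ _ 0])
  ultimately show ?thesis by (simp add: zero_prod_def)
qed

end

theorem corollary5p4:
  fixes scale :: "'r::field \<Rightarrow> 'v \<Rightarrow> 'v::ab_group_add"
    and C :: "nat \<Rightarrow> nat \<Rightarrow> 'v set"
    and d21 d10 d01 :: "nat \<Rightarrow> nat \<Rightarrow> 'v \<Rightarrow> 'v"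
  assumes "bigraded_complex scale C d21 d10 d01"
  shows "lin_iso (fscale scale) (pscale scale scale)
           (B_C C d21 d10 d01 1) (B_N0 C d10 d01 1 \<times> B1_col0 C d01)
       \<and> lin_iso (fscale scale) (pscale scale (fscale scale))
           (Z_C C d21 d10 d01 1) (Z_N0 C d10 d01 1 \<times> ker_rho1 C d21 d10 d01)
       \<and> quot_iso (fscale scale) (pscale scale (fscale scale))
           (Z_C C d21 d10 d01 1) (B_C C d21 d10 d01 1)
           (Z_N0 C d10 d01 1 \<times> ker_rho1 C d21 d10 d01)
           (B_N0 C d10 d01 1 \<times> emb01 ` B1_col0 C d01)"
proof -
  interpret bgc scale C d21 d10 d01 by (rule bgc.intro) (rule assms)
  obtain f where f: "lin_on (fscale scale) (pscale scale scale) (B_C C d21 d10 d01 1) f"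
    "bij_betw f (B_C C d21 d10 d01 1) (B_N0 C d10 d01 1 \<times> B1_col0 C d01)"
    using split_iso[OF fvs vs sub_B1 sub_B1 order_refl lin_01 p01_B1 p01_B1 lin_10 inj_B1 q_B1'] by blast
  have P1: "lin_iso (fscale scale) (pscale scale scale)
           (B_C C d21 d10 d01 1) (B_N0 C d10 d01 1 \<times> B1_col0 C d01)"
    unfolding lin_iso_def using f by blast
  obtain g where g: "lin_on (fscale scale) (pscale scale (fscale scale)) (Z_C C d21 d10 d01 1) g"
    "bij_betw g (Z_C C d21 d10 d01 1) (Z_N0 C d10 d01 1 \<times> ker_rho1 C d21 d10 d01)"
    "\<forall>x\<in>Z_C C d21 d10 d01 1. g x \<in> (\<lambda>eta. eta 1 0) ` {v \<in> B_C C d21 d10 d01 1. pi1 v = 0} \<times> emb01 ` B1_col0 C d01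
        \<longleftrightarrow> x \<in> B_C C d21 d10 d01 1"
    using split_iso[OF fvs fvs sub_Z1 sub_B1 B1_sub_Z1 lin_pi1 ker_rho1_char[symmetric] pi1_B1 lin_10 inj_Z1 q_Z1]
    by blast
  have P2: "lin_iso (fscale scale) (pscale scale (fscale scale))
           (Z_C C d21 d10 d01 1) (Z_N0 C d10 d01 1 \<times> ker_rho1 C d21 d10 d01)"
    unfolding lin_iso_def using g by blast
  have P3: "quot_iso (fscale scale) (pscale scale (fscale scale))
           (Z_C C d21 d10 d01 1) (B_C C d21 d10 d01 1)
           (Z_N0 C d10 d01 1 \<times> ker_rho1 C d21 d10 d01)
           (B_N0 C d10 d01 1 \<times> emb01 ` B1_col0 C d01)"
    unfolding quot_iso_def
  proof (intro exI conjI ballI)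
    show "lin_on (fscale scale) (pscale scale (fscale scale)) (Z_C C d21 d10 d01 1) g" by (rule g(1))
    show "g ` Z_C C d21 d10 d01 1 \<subseteq> Z_N0 C d10 d01 1 \<times> ker_rho1 C d21 d10 d01"
      using g(2) bij_betw_imp_surj_on by blast
  next
    fix y assume "y \<in> Z_N0 C d10 d01 1 \<times> ker_rho1 C d21 d10 d01"
    then obtain x where x: "x \<in> Z_C C d21 d10 d01 1" "y = g x"
      using g(2) bij_betw_imp_surj_on by (metis imageE)
    have "y - g x \<in> B_N0 C d10 d01 1 \<times> emb01 ` B1_col0 C d01" using zero_E x(2) by simp
    then show "\<exists>x\<in>Z_C C d21 d10 d01 1. y - g x \<in> B_N0 C d10 d01 1 \<times> emb01 ` B1_col0 C d01"
      by (rule bexI[OF _ x(1)])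
  next
    fix x assume "x \<in> Z_C C d21 d10 d01 1"
    then show "g x \<in> B_N0 C d10 d01 1 \<times> emb01 ` B1_col0 C d01 \<longleftrightarrow> x \<in> B_C C d21 d10 d01 1"
      using g(3) q_B1 by simp
  qed
  show ?thesis using P1 P2 P3 by blast
qed

end
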